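(* Let $m=m_n$ with $m^2\to\infty$ and $m^2/n\to 0$ as $n\to\infty$. Let $\gamma>1$ be a constant and $\delta = \gamma\, 2e^{-3/4}\sqrt{m}\,4^{-\xi n/m^2}$, with $\xi=\xi_m$ as in the context. Then \[ 2^{-n} \sum_{k=0}^{\lfloor n/4\rfloor} \binom{n}{k} R_k(\delta) + 2^{-n} \sum_{k=\lceil 3n/4\rceil}^n \binom{n}{k} R_k(\delta) = o(1) \quad (n\to\infty). \]
   Context: An $m\times m$ GOE matrix is a random symmetric matrix whose entries on and above the diagonal are independent centered normal variables, with variance $2$ on the diagonal and variance $1$ off the diagonal. Two GOE matrices $X,Y$ have correlation $\rho\in[-1,1]$ if the pairs $(X_{ij},Y_{ij})$, $i\le j$, are independent across index pairs, each jointly normal with $\mathrm{corr}(X_{ij},Y_{ij})=\rho$. For $k=0,\ldots,n$ let $\rho_k = 1-2k/n$ and \[R_k(\delta) = \frac{\mathbb{P}(\|X_k\| \leq \delta,\ \|Y_k\| \leq \delta)}{\mathbb{P}(\|X\| \leq \delta)^2},\] where $X$ is an $m\times m$ GOE matrix and $X_k,Y_k$ are $m\times m$ GOE matrices with correlation $\rho_k$; $\|\cdot\|$ is the spectral norm. The sequence $\xi=\xi_m\to1$ is defined by $\mathbb{P}(\|X\| \leq \delta) = \left(\frac{e^{3/4}}{2\sqrt{m}}\delta\right)^{\xi^{-1}m^2/2}$. *)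

theory Defs
  imports "HOL-Probability.Probability"
begin

definition goe_idx :: "nat \<Rightarrow> (nat \<times> nat) set" where
  "goe_idx m = {(i, j). i \<le> j \<and> j < m}"

definition goe_var :: "nat \<times> nat \<Rightarrow> real" where
  "goe_var p = (if fst p = snd p then 2 else 1)"

definition sym_of :: "(nat \<times> nat \<Rightarrow> real) \<Rightarrow> nat \<Rightarrow> nat \<Rightarrow> real" where
  "sym_of g i j = (if i \<le> j then g (i, j) else g (j, i))"

definition spec_norm :: "nat \<Rightarrow> (nat \<Rightarrow> nat \<Rightarrow> real) \<Rightarrow> real" where
  "spec_norm m A = Sup {sqrt (\<Sum>i<m. (\<Sum>j<m. A i j * x j)\<^sup>2) | x. (\<Sum>j<m. (x j)\<^sup>2) = 1}"

definition std_gauss :: "real measure" where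
  "std_gauss = density lborel std_normal_density"

definition goe_space :: "nat \<Rightarrow> (nat \<times> nat \<Rightarrow> real) measure" where
  "goe_space m = PiM (goe_idx m) (\<lambda>_. std_gauss)"

definition goe_mat :: "(nat \<times> nat \<Rightarrow> real) \<Rightarrow> nat \<Rightarrow> nat \<Rightarrow> real" where
  "goe_mat z = sym_of (\<lambda>p. sqrt (goe_var p) * z p)"

text \<open>Probability space for a pair of correlated GOE matrices: two independent families
  of i.i.d. standard normals (tagged False / True).\<close>
definition goe_pair_space :: "nat \<Rightarrow> ((nat \<times> nat) \<times> bool \<Rightarrow> real) measure" where
  "goe_pair_space m = PiM (goe_idx m \<times> UNIV) (\<lambda>_. std_gauss)"

text \<open>X entry = sqrt(var) Z1, Y entry = sqrt(var) (rho Z1 + sqrt(1-rho^2) Z2):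
  jointly normal, same variance, correlation rho, independent across index pairs.\<close>
definition corr_X :: "((nat \<times> nat) \<times> bool \<Rightarrow> real) \<Rightarrow> nat \<Rightarrow> nat \<Rightarrow> real" where
  "corr_X w = sym_of (\<lambda>p. sqrt (goe_var p) * w (p, False))"

definition corr_Y :: "real \<Rightarrow> ((nat \<times> nat) \<times> bool \<Rightarrow> real) \<Rightarrow> nat \<Rightarrow> nat \<Rightarrow> real" where
  "corr_Y \<rho> w = sym_of (\<lambda>p. sqrt (goe_var p) * (\<rho> * w (p, False) + sqrt (1 - \<rho>\<^sup>2) * w (p, True)))"

definition goe_small_prob :: "nat \<Rightarrow> real \<Rightarrow> real" where
  "goe_small_prob m \<delta> =
     measure (goe_space m) {z \<in> space (goe_space m). spec_norm m (goe_mat z) \<le> \<delta>}"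

definition goe_pair_small_prob :: "nat \<Rightarrow> real \<Rightarrow> real \<Rightarrow> real" where
  "goe_pair_small_prob m \<rho> \<delta> =
     measure (goe_pair_space m)
       {w \<in> space (goe_pair_space m). spec_norm m (corr_X w) \<le> \<delta> \<and> spec_norm m (corr_Y \<rho> w) \<le> \<delta>}"

definition R_ratio :: "nat \<Rightarrow> nat \<Rightarrow> nat \<Rightarrow> real \<Rightarrow> real" where
  "R_ratio m n k \<delta> = goe_pair_small_prob m (1 - 2 * real k / real n) \<delta> / (goe_small_prob m \<delta>)\<^sup>2"

end

theory Submission
  imports Defs "HOL-Real_Asymp.Real_Asymp"
begin

definition sn_set :: "nat \<Rightarrow> (nat \<Rightarrow> nat \<Rightarrow> real) \<Rightarrow> real set" where
  "sn_set m A = {sqrt (\<Sum>i<m. (\<Sum>j<m. A i j * x j)\<^sup>2) | x. (\<Sum>j<m. (x j)\<^sup>2) = 1}"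

lemma spec_norm_sn: "spec_norm m A = Sup (sn_set m A)"
  unfolding spec_norm_def sn_set_def by simp

lemma sn_set_ne: "m \<ge> 1 \<Longrightarrow> sn_set m A \<noteq> {}"
proof -
  assume m: "m \<ge> 1"
  define x0 :: "nat \<Rightarrow> real" where "x0 = (\<lambda>j. if j = 0 then 1 else 0)"
  have h: "(\<Sum>j<m. (x0 j)\<^sup>2) = 1"
  proof -
    have "(\<Sum>j<m. (x0 j)\<^sup>2) = (\<Sum>j<m. if j = 0 then 1 else 0)"
      unfolding x0_def by (intro sum.cong) auto
    also have "\<dots> = 1" using m by (simp add: sum.delta)
    finally show ?thesis .
  qed
  have "sqrt (\<Sum>i<m. (\<Sum>j<m. A i j * x0 j)\<^sup>2) \<in> sn_set m A"
    unfolding sn_set_def by (intro CollectI exI[of _ x0]) (use h in simp)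
  then show ?thesis by blast
qed

lemma abs_x_le1:
  fixes m j :: nat
  assumes "(\<Sum>j<m. (x j)\<^sup>2) = (1::real)" "j < m"
  shows "\<bar>x j\<bar> \<le> 1"
proof -
  have "(x j)\<^sup>2 \<le> (\<Sum>j<m. (x j)\<^sup>2)"
    by (rule member_le_sum) (use assms(2) in auto)
  then have "(x j)\<^sup>2 \<le> 1" using assms(1) by simp
  then show ?thesis by (simp add: abs_square_le_1)
qed

lemma sn_set_bdd: "bdd_above (sn_set m A)"
proof -
  let ?K = "sqrt (\<Sum>i<m. (\<Sum>j<m. \<bar>A i j\<bar>)\<^sup>2)"
  have "y \<le> ?K" if yin: "y \<in> sn_set m A" for y
  proof -
    obtain x where x: "(\<Sum>j<m. (x j)\<^sup>2) = 1" "y = sqrt (\<Sum>i<m. (\<Sum>j<m. A i j * x j)\<^sup>2)"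
      using yin unfolding sn_set_def by auto
    have "\<bar>\<Sum>j<m. A i j * x j\<bar> \<le> (\<Sum>j<m. \<bar>A i j\<bar>)" for i
    proof -
      have "\<bar>\<Sum>j<m. A i j * x j\<bar> \<le> (\<Sum>j<m. \<bar>A i j * x j\<bar>)" by (rule sum_abs)
      also have "\<dots> \<le> (\<Sum>j<m. \<bar>A i j\<bar>)"
      proof (intro sum_mono)
        fix j assume "j \<in> {..<m}"
        then have "\<bar>x j\<bar> \<le> 1" using abs_x_le1[OF x(1)] by auto
        then show "\<bar>A i j * x j\<bar> \<le> \<bar>A i j\<bar>"
          by (simp add: abs_mult mult_left_le)
      qed
      finally show ?thesis .
    qed
    then have "(\<Sum>j<m. A i j * x j)\<^sup>2 \<le> (\<Sum>j<m. \<bar>A i j\<bar>)\<^sup>2" for i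
      by (meson abs_ge_zero order_trans power2_le_iff_abs_le)
    then have "(\<Sum>i<m. (\<Sum>j<m. A i j * x j)\<^sup>2) \<le> (\<Sum>i<m. (\<Sum>j<m. \<bar>A i j\<bar>)\<^sup>2)"
      by (intro sum_mono) auto
    then show ?thesis using x(2) by simp
  qed
  then show ?thesis by (intro bdd_aboveI) 
qed

lemma sn_upper:
  assumes "(\<Sum>j<m. (x j)\<^sup>2) = 1"
  shows "sqrt (\<Sum>i<m. (\<Sum>j<m. A i j * x j)\<^sup>2) \<le> spec_norm m A"
  unfolding spec_norm_sn using assms sn_set_bdd
  by (intro cSup_upper) (auto simp: sn_set_def)

lemma sn_least:
  assumes "m \<ge> 1"
    and "\<And>x. (\<Sum>j<m. (x j)\<^sup>2) = 1 \<Longrightarrow> sqrt (\<Sum>i<m. (\<Sum>j<m. A i j * x j)\<^sup>2) \<le> c"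
  shows "spec_norm m A \<le> c"
  unfolding spec_norm_sn using assms sn_set_ne
  by (intro cSup_least) (auto simp: sn_set_def)

lemma sn_cong:
  assumes "\<And>i j. i < m \<Longrightarrow> j < m \<Longrightarrow> A i j = B i j"
  shows "spec_norm m A = spec_norm m B"
proof -
  have "(\<Sum>i<m. (\<Sum>j<m. A i j * x j)\<^sup>2) = (\<Sum>i<m. (\<Sum>j<m. B i j * x j)\<^sup>2)" for x
    using assms by (intro sum.cong refl arg_cong[where f="\<lambda>t. t\<^sup>2"]) auto
  then have "sn_set m A = sn_set m B" unfolding sn_set_def by simp
  then show ?thesis by (simp add: spec_norm_sn)
qed

lemma sn_triangle:
  assumes "m \<ge> 1"
  shows "spec_norm m (\<lambda>i j. A i j + B i j) \<le> spec_norm m A + spec_norm m B"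
proof (rule sn_least[OF assms])
  fix x :: "nat \<Rightarrow> real" assume x: "(\<Sum>j<m. (x j)\<^sup>2) = 1"
  have "sqrt (\<Sum>i<m. (\<Sum>j<m. (A i j + B i j) * x j)\<^sup>2)
      = L2_set (\<lambda>i. (\<Sum>j<m. A i j * x j) + (\<Sum>j<m. B i j * x j)) {..<m}"
    unfolding L2_set_def by (simp add: distrib_right sum.distrib)
  also have "\<dots> \<le> L2_set (\<lambda>i. \<Sum>j<m. A i j * x j) {..<m} + L2_set (\<lambda>i. \<Sum>j<m. B i j * x j) {..<m}"
    by (rule L2_set_triangle_ineq)
  also have "\<dots> \<le> spec_norm m A + spec_norm m B"
    unfolding L2_set_def using sn_upper[OF x] by (intro add_mono) auto
  finally show "sqrt (\<Sum>i<m. (\<Sum>j<m. (A i j + B i j) * x j)\<^sup>2) \<le> spec_norm m A + spec_norm m B" .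
qed

lemma sn_scale:
  assumes "m \<ge> 1"
  shows "spec_norm m (\<lambda>i j. c * A i j) \<le> \<bar>c\<bar> * spec_norm m A"
proof (rule sn_least[OF assms])
  fix x :: "nat \<Rightarrow> real" assume x: "(\<Sum>j<m. (x j)\<^sup>2) = 1"
  have "(\<Sum>i<m. (\<Sum>j<m. c * A i j * x j)\<^sup>2) = c\<^sup>2 * (\<Sum>i<m. (\<Sum>j<m. A i j * x j)\<^sup>2)"
  proof -
    have "(\<Sum>j<m. c * A i j * x j) = c * (\<Sum>j<m. A i j * x j)" for i
      by (simp add: sum_distrib_left mult.assoc)
    then have "(\<Sum>i<m. (\<Sum>j<m. c * A i j * x j)\<^sup>2) = (\<Sum>i<m. c\<^sup>2 * (\<Sum>j<m. A i j * x j)\<^sup>2)"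
      by (simp only: power_mult_distrib)
    then show ?thesis by (simp only: sum_distrib_left)
  qed
  then have "sqrt (\<Sum>i<m. (\<Sum>j<m. c * A i j * x j)\<^sup>2) = \<bar>c\<bar> * sqrt (\<Sum>i<m. (\<Sum>j<m. A i j * x j)\<^sup>2)"
    by (simp add: real_sqrt_mult)
  also have "\<dots> \<le> \<bar>c\<bar> * spec_norm m A"
    using sn_upper[OF x] by (intro mult_left_mono) auto
  finally show "sqrt (\<Sum>i<m. (\<Sum>j<m. c * A i j * x j)\<^sup>2) \<le> \<bar>c\<bar> * spec_norm m A" .
qed


lemma std_gauss_prob: "prob_space std_gauss"
  unfolding std_gauss_def by (rule prob_space_normal_density) simp

lemma sets_std_gauss[simp, measurable_cong]: "sets std_gauss = sets borel"
  unfolding std_gauss_def by simp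

lemma space_std_gauss[simp]: "space std_gauss = UNIV"
  unfolding std_gauss_def by simp

lemma phi_scale:
  fixes t y :: real
  shows "t * std_normal_density (t * y) = std_normal_density y * (t * exp (- (t\<^sup>2 - 1) * y\<^sup>2 / 2))"
proof -
  have "exp (- (t * y)\<^sup>2 / 2) = exp (- y\<^sup>2 / 2) * exp (- (t\<^sup>2 - 1) * y\<^sup>2 / 2)"
    by (simp add: exp_add[symmetric] power_mult_distrib algebra_simps)
  then show ?thesis
    unfolding normal_density_def by (simp add: algebra_simps)
qed

lemma G_scale:
  fixes t :: real assumes t: "t \<ge> 1"
  shows "distr std_gauss std_gauss (\<lambda>x. x / t) = density std_gauss (\<lambda>y. ennreal (t * exp (- (t\<^sup>2 - 1) * y\<^sup>2 / 2)))"
proof (rule measure_eqI)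
  show "sets (distr std_gauss std_gauss (\<lambda>x. x / t)) = sets (density std_gauss (\<lambda>y. ennreal (t * exp (- (t\<^sup>2 - 1) * y\<^sup>2 / 2))))"
    by simp
next
  fix A assume "A \<in> sets (distr std_gauss std_gauss (\<lambda>x. x / t))"
  then have A[measurable]: "A \<in> sets borel" by simp
  have tpos: "t > 0" using t by simp
  have pre: "(\<lambda>x. x / t) -` A \<in> sets borel"
    using measurable_sets[of "\<lambda>x::real. x / t" borel borel A] A by simp
  have "emeasure (distr std_gauss std_gauss (\<lambda>x. x / t)) A = emeasure std_gauss ((\<lambda>x. x / t) -` A \<inter> space std_gauss)"
    by (intro emeasure_distr) auto
  also have "\<dots> = (\<integral>\<^sup>+ x. ennreal (std_normal_density x) * indicator ((\<lambda>x. x / t) -` A) x \<partial>lborel)"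
    unfolding std_gauss_def using pre by (subst emeasure_density) auto
  also have "\<dots> = (\<integral>\<^sup>+ x. ennreal (std_normal_density x) * indicator A (x / t) \<partial>lborel)"
    by (intro nn_integral_cong) (auto simp: indicator_def)
  also have "\<dots> = ennreal \<bar>t\<bar> * (\<integral>\<^sup>+ y. ennreal (std_normal_density (0 + t * y)) * indicator A ((0 + t * y) / t) \<partial>lborel)"
    using tpos by (intro nn_integral_real_affine) auto
  also have "\<dots> = (\<integral>\<^sup>+ y. ennreal t * (ennreal (std_normal_density (t * y)) * indicator A y) \<partial>lborel)"
    using tpos by (subst nn_integral_cmult) auto
  also have "\<dots> = (\<integral>\<^sup>+ y. ennreal (std_normal_density y) * (ennreal (t * exp (- (t\<^sup>2 - 1) * y\<^sup>2 / 2)) * indicator A y) \<partial>lborel)"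
  proof (intro nn_integral_cong)
    fix y :: real
    have "ennreal t * ennreal (std_normal_density (t * y)) = ennreal (std_normal_density y) * ennreal (t * exp (- (t\<^sup>2 - 1) * y\<^sup>2 / 2))"
      using tpos phi_scale[of t y]
      by (simp add: ennreal_mult'[symmetric] normal_density_nonneg ennreal_mult''[symmetric])
    then show "ennreal t * (ennreal (std_normal_density (t * y)) * indicator A y) = ennreal (std_normal_density y) * (ennreal (t * exp (- (t\<^sup>2 - 1) * y\<^sup>2 / 2)) * indicator A y)"
      by (simp add: mult.assoc[symmetric])
  qed
  also have "\<dots> = (\<integral>\<^sup>+ y. ennreal (t * exp (- (t\<^sup>2 - 1) * y\<^sup>2 / 2)) * indicator A y \<partial>std_gauss)"
    unfolding std_gauss_def by (subst nn_integral_density) auto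
  also have "\<dots> = emeasure (density std_gauss (\<lambda>y. ennreal (t * exp (- (t\<^sup>2 - 1) * y\<^sup>2 / 2)))) A"
    by (subst emeasure_density) auto
  finally show "emeasure (distr std_gauss std_gauss (\<lambda>x. x / t)) A = emeasure (density std_gauss (\<lambda>y. ennreal (t * exp (- (t\<^sup>2 - 1) * y\<^sup>2 / 2)))) A" .
qed

lemma prod_mono_ennreal:
  "(\<And>i. i \<in> A \<Longrightarrow> f i \<le> (g i :: ennreal)) \<Longrightarrow> prod f A \<le> prod g A"
  by (induct A rule: infinite_finite_induct) (auto intro!: mult_mono)

lemma PiM_density_le:
  fixes M :: "'a measure" and h :: "'a \<Rightarrow> ennreal" and c :: ennreal and I :: "'i set"
  assumes I: "finite I" and M: "prob_space M" and N: "prob_space (density M h)"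
    and h[measurable]: "h \<in> borel_measurable M" and hc: "\<And>x. x \<in> space M \<Longrightarrow> h x \<le> c"
    and A: "A \<in> sets (PiM I (\<lambda>_. M))"
  shows "emeasure (PiM I (\<lambda>_. density M h)) A \<le> c ^ card I * emeasure (PiM I (\<lambda>_. M)) A"
proof -
  interpret PM: product_sigma_finite "\<lambda>_. M"
    unfolding product_sigma_finite_def using M prob_space_imp_sigma_finite by blast
  interpret PN: product_sigma_finite "\<lambda>_. density M h"
    unfolding product_sigma_finite_def using N prob_space_imp_sigma_finite by blast
  have sets_eq: "sets (PiM I (\<lambda>_. density M h)) = sets (PiM I (\<lambda>_. M))"
    by (intro sets_PiM_cong) auto
  have hp[measurable]: "(\<lambda>x. \<Prod>i\<in>I. h (x i)) \<in> borel_measurable (PiM I (\<lambda>_. M))"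
    by measurable
  have "density (PiM I (\<lambda>_. M)) (\<lambda>x. \<Prod>i\<in>I. h (x i)) = PiM I (\<lambda>_. density M h)"
  proof (rule PN.PiM_eqI[OF I])
    show "sets (density (PiM I (\<lambda>_. M)) (\<lambda>x. \<Prod>i\<in>I. h (x i))) = sets (PiM I (\<lambda>_. density M h))"
      using sets_eq by simp
  next
    fix E assume E: "\<And>i. i \<in> I \<Longrightarrow> E i \<in> sets (density M h)"
    then have E': "\<And>i. i \<in> I \<Longrightarrow> E i \<in> sets M" by simp
    have PE: "Pi\<^sub>E I E \<in> sets (PiM I (\<lambda>_. M))"
      using E' I by (intro sets_PiM_I_finite) auto
    have "emeasure (density (PiM I (\<lambda>_. M)) (\<lambda>x. \<Prod>i\<in>I. h (x i))) (Pi\<^sub>E I E)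
        = (\<integral>\<^sup>+ x. (\<Prod>i\<in>I. h (x i)) * indicator (Pi\<^sub>E I E) x \<partial>PiM I (\<lambda>_. M))"
      using PE by (intro emeasure_density) auto
    also have "\<dots> = (\<integral>\<^sup>+ x. (\<Prod>i\<in>I. h (x i) * indicator (E i) (x i)) \<partial>PiM I (\<lambda>_. M))"
    proof (intro nn_integral_cong)
      fix x assume x: "x \<in> space (PiM I (\<lambda>_. M))"
      then have ext: "x \<in> extensional I" by (simp add: space_PiM PiE_def)
      have "indicator (Pi\<^sub>E I E) x = (\<Prod>i\<in>I. indicator (E i) (x i) :: ennreal)"
        using ext I by (auto simp: indicator_def PiE_def Pi_def prod.neutral)
      then show "(\<Prod>i\<in>I. h (x i)) * indicator (Pi\<^sub>E I E) x = (\<Prod>i\<in>I. h (x i) * indicator (E i) (x i))"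
        by (simp add: prod.distrib)
    qed
    also have "\<dots> = (\<Prod>i\<in>I. \<integral>\<^sup>+ y. h y * indicator (E i) y \<partial>M)"
      using E' by (intro PM.product_nn_integral_prod I) auto
    also have "\<dots> = (\<Prod>i\<in>I. emeasure (density M h) (E i))"
      using E' by (intro prod.cong refl emeasure_density[symmetric]) auto
    finally show "emeasure (density (PiM I (\<lambda>_. M)) (\<lambda>x. \<Prod>i\<in>I. h (x i))) (Pi\<^sub>E I E) = (\<Prod>i\<in>I. emeasure (density M h) (E i))" .
  qed
  then have "emeasure (PiM I (\<lambda>_. density M h)) A = (\<integral>\<^sup>+ x. (\<Prod>i\<in>I. h (x i)) * indicator A x \<partial>PiM I (\<lambda>_. M))"
    using A by (metis emeasure_density hp)
  also have "\<dots> \<le> (\<integral>\<^sup>+ x. c ^ card I * indicator A x \<partial>PiM I (\<lambda>_. M))"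
  proof (intro nn_integral_mono)
    fix x assume x: "x \<in> space (PiM I (\<lambda>_. M))"
    then have "\<And>i. i \<in> I \<Longrightarrow> x i \<in> space M" by (auto simp: space_PiM)
    then have "(\<Prod>i\<in>I. h (x i)) \<le> (\<Prod>i\<in>I. c)"
      by (intro prod_mono_ennreal) (auto intro: hc)
    then show "(\<Prod>i\<in>I. h (x i)) * indicator A x \<le> c ^ card I * indicator A x"
      by (intro mult_right_mono) auto
  qed
  also have "\<dots> = c ^ card I * emeasure (PiM I (\<lambda>_. M)) A"
    using A by (simp add: nn_integral_cmult_indicator)
  finally show ?thesis .
qed


lemma finite_goe_idx: "finite (goe_idx m)"
proof -
  have "goe_idx m \<subseteq> {..<m} \<times> {..<m}" unfolding goe_idx_def by auto
  then show ?thesis by (rule finite_subset) auto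
qed

lemma card_goe_idx: "card (goe_idx m) \<le> m * m"
proof -
  have "goe_idx m \<subseteq> {..<m} \<times> {..<m}" unfolding goe_idx_def by auto
  then have "card (goe_idx m) \<le> card ({..<m} \<times> {..<m})" by (intro card_mono) auto
  then show ?thesis by (simp add: card_cartesian_product)
qed

lemma goe_space_prob: "prob_space (goe_space m)"
  unfolding goe_space_def by (intro prob_space_PiM std_gauss_prob)

lemma goe_scale_bound:
  fixes t :: real
  assumes t: "t \<ge> 1" and E: "E \<in> sets (goe_space m)"
  shows "measure (goe_space m) (compose (goe_idx m) (\<lambda>x. x / t) -` E \<inter> space (goe_space m))
           \<le> t ^ card (goe_idx m) * measure (goe_space m) E"
proof -
  let ?I = "goe_idx m" and ?Q = "goe_space m"
  define h where "h = (\<lambda>y::real. ennreal (t * exp (- (t\<^sup>2 - 1) * y\<^sup>2 / 2)))"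
  interpret Q: prob_space ?Q by (rule goe_space_prob)
  have fm[measurable]: "(\<lambda>x::real. x / t) \<in> measurable std_gauss std_gauss" by simp
  have Sm: "compose ?I (\<lambda>x. x / t) \<in> measurable ?Q ?Q"
    unfolding goe_space_def compose_def by measurable
  have d: "distr ?Q ?Q (compose ?I (\<lambda>x. x / t)) = PiM ?I (\<lambda>_. distr std_gauss std_gauss (\<lambda>x. x / t))"
    unfolding goe_space_def
    by (rule distr_PiM_finite_prob_space'[OF finite_goe_idx]) (auto simp: std_gauss_prob)
  have dens: "distr std_gauss std_gauss (\<lambda>x. x / t) = density std_gauss h"
    unfolding h_def by (rule G_scale[OF t])
  have hprob: "prob_space (density std_gauss h)"
    using dens[symmetric] std_gauss_prob by (metis prob_space.prob_space_distr fm)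
  have hle: "h y \<le> ennreal t" for y
  proof -
    have "t\<^sup>2 \<ge> 1" using t by (simp add: one_le_power)
    then have "(t\<^sup>2 - 1) * y\<^sup>2 \<ge> 0" by simp
    then have "- (t\<^sup>2 - 1) * y\<^sup>2 / 2 \<le> 0" by (simp only: mult_minus_left)
    then have "exp (- (t\<^sup>2 - 1) * y\<^sup>2 / 2) \<le> 1" by simp
    then have "t * exp (- (t\<^sup>2 - 1) * y\<^sup>2 / 2) \<le> t" using t by (simp add: mult_left_le)
    then show ?thesis unfolding h_def by (simp add: ennreal_leI)
  qed
  have "emeasure ?Q (compose ?I (\<lambda>x. x / t) -` E \<inter> space ?Q) = emeasure (distr ?Q ?Q (compose ?I (\<lambda>x. x / t))) E"
    using Sm E by (simp add: emeasure_distr)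
  also have "\<dots> = emeasure (PiM ?I (\<lambda>_. density std_gauss h)) E"
    using d dens by simp
  also have "\<dots> \<le> ennreal t ^ card ?I * emeasure (PiM ?I (\<lambda>_. std_gauss)) E"
    using E by (intro PiM_density_le finite_goe_idx std_gauss_prob hprob hle)
       (auto simp: goe_space_def h_def)
  also have "\<dots> = ennreal (t ^ card ?I * measure ?Q E)"
    using t by (simp add: goe_space_def[symmetric] Q.emeasure_eq_measure ennreal_power ennreal_mult)
  finally have "emeasure ?Q (compose ?I (\<lambda>x. x / t) -` E \<inter> space ?Q) \<le> ennreal (t ^ card ?I * measure ?Q E)" .
  then show ?thesis
    using t by (simp add: Q.emeasure_eq_measure)
qed


lemma pair_space_prob: "prob_space (goe_pair_space m)"
  unfolding goe_pair_space_def by (intro prob_space_PiM std_gauss_prob)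

lemma pair_marginal:
  fixes b :: bool
  shows "distr (goe_pair_space m) (goe_space m) (\<lambda>\<omega>. \<lambda>p\<in>goe_idx m. \<omega> (p, b)) = goe_space m"
proof -
  have "distr (PiM (goe_idx m \<times> UNIV) (\<lambda>_. std_gauss)) (PiM (goe_idx m) (\<lambda>i. (\<lambda>_. std_gauss) ((\<lambda>p. (p, b)) i)))
          (\<lambda>\<omega>. \<lambda>n\<in>goe_idx m. \<omega> ((\<lambda>p. (p, b)) n)) = PiM (goe_idx m) (\<lambda>i. (\<lambda>_. std_gauss) ((\<lambda>p. (p, b)) i))"
    by (rule distr_PiM_reindex) (auto simp: std_gauss_prob inj_on_def)
  then show ?thesis unfolding goe_pair_space_def goe_space_def by simp
qed

lemma fb_meas: "(\<lambda>\<omega>. \<lambda>p\<in>goe_idx m. \<omega> (p, b)) \<in> measurable (goe_pair_space m) (goe_space m)"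
  unfolding goe_pair_space_def goe_space_def by measurable

lemma pair_indep:
  assumes m: "m \<ge> 1" and E: "E \<in> sets (goe_space m)" and F: "F \<in> sets (goe_space m)"
  shows "measure (goe_pair_space m) {w \<in> space (goe_pair_space m). (\<lambda>p\<in>goe_idx m. w (p, False)) \<in> E \<and> (\<lambda>p\<in>goe_idx m. w (p, True)) \<in> F}
         = measure (goe_space m) E * measure (goe_space m) F"
proof -
  let ?I = "goe_idx m" and ?K = "goe_idx m \<times> (UNIV :: bool set)"
  let ?P = "goe_pair_space m" and ?Q = "goe_space m"
  let ?fF = "\<lambda>\<omega>. \<lambda>p\<in>goe_idx m. \<omega> (p, False)" and ?fT = "\<lambda>\<omega>. \<lambda>p\<in>goe_idx m. \<omega> (p, True)"
  interpret P: prob_space ?P by (rule pair_space_prob)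
  have "(0, 0) \<in> ?I" using m unfolding goe_idx_def by simp
  then have Kne: "?K \<noteq> {}" by blast
  have rv: "\<And>i. i \<in> ?K \<Longrightarrow> (\<lambda>\<omega>. \<omega> i) \<in> measurable ?P std_gauss"
    unfolding goe_pair_space_def by (rule measurable_component_singleton)
  have "distr ?P (PiM ?K (\<lambda>_. std_gauss)) (\<lambda>x. \<lambda>i\<in>?K. x i) = distr ?P ?P (\<lambda>x. x)"
    unfolding goe_pair_space_def
    by (intro distr_cong) (auto simp: space_PiM PiE_def extensional_restrict)
  also have "\<dots> = ?P" by (rule distr_id)
  also have "\<dots> = PiM ?K (\<lambda>i. distr ?P std_gauss (\<lambda>\<omega>. \<omega> i))"
    unfolding goe_pair_space_def
    by (intro PiM_cong refl distr_PiM_component[symmetric]) (auto simp: std_gauss_prob)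
  finally have "P.indep_vars (\<lambda>_. std_gauss) (\<lambda>i \<omega>. \<omega> i) ?K"
    using P.indep_vars_iff_distr_eq_PiM'[where I="?K" and X="\<lambda>i \<omega>. \<omega> i" and M'="\<lambda>_. std_gauss", OF Kne rv] by simp
  then have iv: "P.indep_var (PiM (?I \<times> {False}) (\<lambda>_. std_gauss)) (\<lambda>\<omega>. restrict (\<lambda>i. \<omega> i) (?I \<times> {False}))
                    (PiM (?I \<times> {True}) (\<lambda>_. std_gauss)) (\<lambda>\<omega>. restrict (\<lambda>i. \<omega> i) (?I \<times> {True}))"
    by (intro P.indep_var_restrict) auto
  have m1: "(\<lambda>\<omega>. \<lambda>p\<in>goe_idx m. \<omega> (p, b)) \<in> measurable (PiM (?I \<times> {b}) (\<lambda>_. std_gauss)) ?Q" for b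
    unfolding goe_space_def by measurable
  have iv2: "P.indep_var ?Q ((\<lambda>\<omega>. \<lambda>p\<in>goe_idx m. \<omega> (p, False)) \<circ> (\<lambda>\<omega>. restrict (\<lambda>i. \<omega> i) (?I \<times> {False})))
                    ?Q ((\<lambda>\<omega>. \<lambda>p\<in>goe_idx m. \<omega> (p, True)) \<circ> (\<lambda>\<omega>. restrict (\<lambda>i. \<omega> i) (?I \<times> {True})))"
    by (rule P.indep_var_compose[OF iv m1 m1])
  have eqF: "((\<lambda>\<omega>. \<lambda>p\<in>goe_idx m. \<omega> (p, False)) \<circ> (\<lambda>\<omega>. restrict (\<lambda>i. \<omega> i) (?I \<times> {False}))) = ?fF"
    by (auto simp: fun_eq_iff restrict_def)
  have eqT: "((\<lambda>\<omega>. \<lambda>p\<in>goe_idx m. \<omega> (p, True)) \<circ> (\<lambda>\<omega>. restrict (\<lambda>i. \<omega> i) (?I \<times> {True}))) = ?fT"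
    by (auto simp: fun_eq_iff restrict_def)
  have iv3: "P.indep_var ?Q ?fF ?Q ?fT" using iv2 unfolding eqF eqT .
  have "P.prob ((\<lambda>x. (?fF x, ?fT x)) -` (E \<times> F) \<inter> space ?P) = P.prob (?fF -` E \<inter> space ?P) * P.prob (?fT -` F \<inter> space ?P)"
    by (rule P.indep_varD[OF iv3 E F])
  moreover have "(\<lambda>x. (?fF x, ?fT x)) -` (E \<times> F) \<inter> space ?P = {w \<in> space ?P. ?fF w \<in> E \<and> ?fT w \<in> F}"
    by auto
  moreover have "P.prob (?fF -` E \<inter> space ?P) = measure ?Q E"
    using pair_marginal[where m=m and b=False] fb_meas[where m=m and b=False] E by (metis measure_distr)
  moreover have "P.prob (?fT -` F \<inter> space ?P) = measure ?Q F"
    using pair_marginal[where m=m and b=True] fb_meas[where m=m and b=True] F by (metis measure_distr)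
  ultimately show ?thesis by simp
qed


lemma sym_of_minmax: "sym_of g i j = g (min i j, max i j)"
  by (simp add: sym_of_def min_def max_def)

lemma minmax_idx: "i < m \<Longrightarrow> j < m \<Longrightarrow> (min i j, max i j) \<in> goe_idx m"
  by (simp add: goe_idx_def)

definition Aset :: "nat \<Rightarrow> real \<Rightarrow> (nat \<times> nat \<Rightarrow> real) set" where
  "Aset m d = {z \<in> space (goe_space m). spec_norm m (goe_mat z) \<le> d}"

lemma Aset_sets: "goe_small_prob m d > 0 \<Longrightarrow> Aset m d \<in> sets (goe_space m)"
  unfolding goe_small_prob_def Aset_def using measure_notin_sets by fastforce

lemma Sm: "compose (goe_idx m) (\<lambda>x. x / t) \<in> measurable (goe_space m) (goe_space m)"
  unfolding goe_space_def compose_def by measurable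

lemma big_set_sets:
  assumes "E \<in> sets (goe_space m)" "F \<in> sets (goe_space m)"
  shows "{w \<in> space (goe_pair_space m). (\<lambda>p\<in>goe_idx m. w (p, False)) \<in> E \<and> (\<lambda>p\<in>goe_idx m. w (p, True)) \<in> F} \<in> sets (goe_pair_space m)"
proof -
  have "{w \<in> space (goe_pair_space m). (\<lambda>p\<in>goe_idx m. w (p, False)) \<in> E \<and> (\<lambda>p\<in>goe_idx m. w (p, True)) \<in> F}
       = ((\<lambda>\<omega>. \<lambda>p\<in>goe_idx m. \<omega> (p, False)) -` E \<inter> space (goe_pair_space m)) \<inter> ((\<lambda>\<omega>. \<lambda>p\<in>goe_idx m. \<omega> (p, True)) -` F \<inter> space (goe_pair_space m))"
    by auto
  also have "\<dots> \<in> sets (goe_pair_space m)"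
    using measurable_sets[OF fb_meas assms(1)] measurable_sets[OF fb_meas assms(2)] by auto
  finally show ?thesis .
qed

lemma corrX_eq:
  assumes "i < m" "j < m"
  shows "corr_X w i j = goe_mat (\<lambda>p\<in>goe_idx m. w (p, False)) i j"
  using minmax_idx[OF assms] unfolding corr_X_def goe_mat_def sym_of_minmax by simp

lemma pair_le_single:
  assumes m: "m \<ge> 1" and P: "goe_small_prob m d > 0"
  shows "goe_pair_small_prob m \<rho> d \<le> goe_small_prob m d"
proof -
  interpret P: prob_space "goe_pair_space m" by (rule pair_space_prob)
  interpret Q: prob_space "goe_space m" by (rule goe_space_prob)
  have E: "Aset m d \<in> sets (goe_space m)" by (rule Aset_sets[OF P])
  have "goe_pair_small_prob m \<rho> d \<le> measure (goe_pair_space m) {w \<in> space (goe_pair_space m). (\<lambda>p\<in>goe_idx m. w (p, False)) \<in> Aset m d \<and> (\<lambda>p\<in>goe_idx m. w (p, True)) \<in> space (goe_space m)}"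
    unfolding goe_pair_small_prob_def
  proof (rule P.finite_measure_mono)
    show "{w \<in> space (goe_pair_space m). spec_norm m (corr_X w) \<le> d \<and> spec_norm m (corr_Y \<rho> w) \<le> d}
        \<subseteq> {w \<in> space (goe_pair_space m). (\<lambda>p\<in>goe_idx m. w (p, False)) \<in> Aset m d \<and> (\<lambda>p\<in>goe_idx m. w (p, True)) \<in> space (goe_space m)}"
    proof safe
      fix w assume w: "w \<in> space (goe_pair_space m)" and X: "spec_norm m (corr_X w) \<le> d"
      show "(\<lambda>p\<in>goe_idx m. w (p, True)) \<in> space (goe_space m)"
        using measurable_space[OF fb_meas w] .
      have "spec_norm m (goe_mat (\<lambda>p\<in>goe_idx m. w (p, False))) = spec_norm m (corr_X w)"
        by (intro sn_cong) (simp add: corrX_eq)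
      then show "(\<lambda>p\<in>goe_idx m. w (p, False)) \<in> Aset m d"
        using X measurable_space[OF fb_meas w] unfolding Aset_def by simp
    qed
    show "{w \<in> space (goe_pair_space m). (\<lambda>p\<in>goe_idx m. w (p, False)) \<in> Aset m d \<and> (\<lambda>p\<in>goe_idx m. w (p, True)) \<in> space (goe_space m)} \<in> sets (goe_pair_space m)"
      using E by (intro big_set_sets) auto
  qed
  also have "\<dots> = measure (goe_space m) (Aset m d) * measure (goe_space m) (space (goe_space m))"
    using E by (intro pair_indep m) auto
  also have "\<dots> = goe_small_prob m d"
    by (simp add: Q.prob_space goe_small_prob_def Aset_def)
  finally show ?thesis .
qed

lemma pair_le_prod:
  assumes m: "m \<ge> 1" and P: "goe_small_prob m d > 0"
    and rho: "\<bar>\<rho>\<bar> < 1" and t: "t \<ge> 1" and d: "d \<ge> 0"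
    and ts: "1 + \<bar>\<rho>\<bar> \<le> t * sqrt (1 - \<rho>\<^sup>2)"
  shows "goe_pair_small_prob m \<rho> d \<le> goe_small_prob m d * (t ^ card (goe_idx m) * goe_small_prob m d)"
proof -
  interpret P: prob_space "goe_pair_space m" by (rule pair_space_prob)
  interpret Q: prob_space "goe_space m" by (rule goe_space_prob)
  define s where "s = sqrt (1 - \<rho>\<^sup>2)"
  have s: "s > 0" unfolding s_def using rho by (simp add: abs_square_less_1)
  have tpos: "t > 0" using t by simp
  have E: "Aset m d \<in> sets (goe_space m)" by (rule Aset_sets[OF P])
  define F where "F = compose (goe_idx m) (\<lambda>x. x / t) -` Aset m d \<inter> space (goe_space m)"
  have F: "F \<in> sets (goe_space m)" unfolding F_def by (rule measurable_sets[OF Sm E])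
  have "goe_pair_small_prob m \<rho> d \<le> measure (goe_pair_space m) {w \<in> space (goe_pair_space m). (\<lambda>p\<in>goe_idx m. w (p, False)) \<in> Aset m d \<and> (\<lambda>p\<in>goe_idx m. w (p, True)) \<in> F}"
    unfolding goe_pair_small_prob_def
  proof (rule P.finite_measure_mono)
    show "{w \<in> space (goe_pair_space m). spec_norm m (corr_X w) \<le> d \<and> spec_norm m (corr_Y \<rho> w) \<le> d}
        \<subseteq> {w \<in> space (goe_pair_space m). (\<lambda>p\<in>goe_idx m. w (p, False)) \<in> Aset m d \<and> (\<lambda>p\<in>goe_idx m. w (p, True)) \<in> F}"
    proof safe
      fix w assume w: "w \<in> space (goe_pair_space m)" and X: "spec_norm m (corr_X w) \<le> d"
        and Y: "spec_norm m (corr_Y \<rho> w) \<le> d"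
      let ?Z = "\<lambda>p\<in>goe_idx m. w (p, True)"
      have Zs: "?Z \<in> space (goe_space m)" using measurable_space[OF fb_meas w] .
      have "spec_norm m (goe_mat (\<lambda>p\<in>goe_idx m. w (p, False))) = spec_norm m (corr_X w)"
        by (intro sn_cong) (simp add: corrX_eq)
      then show "(\<lambda>p\<in>goe_idx m. w (p, False)) \<in> Aset m d"
        using X measurable_space[OF fb_meas w] unfolding Aset_def by simp
      define M1 where "M1 = (\<lambda>i j. (- \<rho>) * corr_X w i j)"
      define M2 where "M2 = (\<lambda>i j. corr_Y \<rho> w i j + M1 i j)"
      define M3 where "M3 = (\<lambda>i j. (1 / s) * M2 i j)"
      define M4 where "M4 = (\<lambda>i j. (1 / t) * M3 i j)"
      have n1: "spec_norm m M1 \<le> \<bar>\<rho>\<bar> * d"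
        using sn_scale[OF m, of "- \<rho>" "corr_X w"] X unfolding M1_def
        by (metis abs_ge_zero abs_minus_cancel mult_left_mono order_trans)
      have n2: "spec_norm m M2 \<le> (1 + \<bar>\<rho>\<bar>) * d"
        using sn_triangle[OF m, of "corr_Y \<rho> w" M1] n1 Y unfolding M2_def by (simp add: algebra_simps)
      have n3: "spec_norm m M3 \<le> (1 / s) * ((1 + \<bar>\<rho>\<bar>) * d)"
        using sn_scale[OF m, of "1 / s" M2] n2 s unfolding M3_def
        by (smt (verit) divide_nonneg_nonneg mult_left_mono)
      have n4: "spec_norm m M4 \<le> (1 / t) * ((1 / s) * ((1 + \<bar>\<rho>\<bar>) * d))"
        using sn_scale[OF m, of "1 / t" M3] n3 tpos unfolding M4_def
        by (smt (verit) divide_nonneg_nonneg mult_left_mono)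
      have "(1 / t) * ((1 / s) * ((1 + \<bar>\<rho>\<bar>) * d)) = ((1 + \<bar>\<rho>\<bar>) / (t * s)) * d"
        by simp
      also have "\<dots> \<le> 1 * d"
        using ts s tpos d unfolding s_def[symmetric] by (intro mult_right_mono) (auto simp: field_simps)
      finally have n4': "spec_norm m M4 \<le> d" using n4 by simp
      have "spec_norm m (goe_mat (compose (goe_idx m) (\<lambda>x. x / t) ?Z)) = spec_norm m M4"
      proof (intro sn_cong)
        fix i j assume ij: "i < m" "j < m"
        note mm = minmax_idx[OF ij]
        show "goe_mat (compose (goe_idx m) (\<lambda>x. x / t) ?Z) i j = M4 i j"
          unfolding M4_def M3_def M2_def M1_def corr_X_def corr_Y_def goe_mat_def sym_of_minmax
          using mm s tpos by (simp add: compose_def s_def[symmetric] field_simps)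
      qed
      then have "compose (goe_idx m) (\<lambda>x. x / t) ?Z \<in> Aset m d"
        using n4' measurable_space[OF Sm Zs] unfolding Aset_def by simp
      then show "?Z \<in> F" unfolding F_def using Zs by simp
    qed
    show "{w \<in> space (goe_pair_space m). (\<lambda>p\<in>goe_idx m. w (p, False)) \<in> Aset m d \<and> (\<lambda>p\<in>goe_idx m. w (p, True)) \<in> F} \<in> sets (goe_pair_space m)"
      using E F by (intro big_set_sets) auto
  qed
  also have "\<dots> = measure (goe_space m) (Aset m d) * measure (goe_space m) F"
    using E F by (intro pair_indep m) auto
  also have "\<dots> \<le> measure (goe_space m) (Aset m d) * (t ^ card (goe_idx m) * measure (goe_space m) (Aset m d))"
    using goe_scale_bound[OF t E] unfolding F_def by (intro mult_left_mono) auto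
  also have "\<dots> = goe_small_prob m d * (t ^ card (goe_idx m) * goe_small_prob m d)"
    by (simp add: goe_small_prob_def Aset_def)
  finally show ?thesis .
qed


lemma R_nonneg: "R_ratio m n k d \<ge> 0"
  unfolding R_ratio_def goe_pair_small_prob_def by simp

lemma R_le_inv:
  assumes m: "m \<ge> 1" and P: "goe_small_prob m d > 0"
  shows "R_ratio m n k d \<le> 1 / goe_small_prob m d"
proof -
  have "R_ratio m n k d \<le> goe_small_prob m d / (goe_small_prob m d)\<^sup>2"
    unfolding R_ratio_def using pair_le_single[OF m P] P by (intro divide_right_mono) auto
  also have "\<dots> = 1 / goe_small_prob m d" using P by (simp add: power2_eq_square)
  finally show ?thesis .
qed

lemma R_le_t:
  assumes m: "m \<ge> 1" and P: "goe_small_prob m d > 0" and d: "d \<ge> 0"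
    and rho: "\<rho> = 1 - 2 * real k / real n" and rho1: "\<bar>\<rho>\<bar> < 1" and t: "t \<ge> 1"
    and cond: "1 + \<bar>\<rho>\<bar> \<le> t\<^sup>2 * (1 - \<bar>\<rho>\<bar>)"
  shows "R_ratio m n k d \<le> t ^ card (goe_idx m)"
proof -
  have "(1 + \<bar>\<rho>\<bar>)\<^sup>2 \<le> t\<^sup>2 * (1 - \<bar>\<rho>\<bar>) * (1 + \<bar>\<rho>\<bar>)"
    using cond by (simp add: power2_eq_square mult_right_mono)
  also have "\<dots> = t\<^sup>2 * (1 - \<rho>\<^sup>2)" by (simp add: power2_eq_square algebra_simps abs_mult_self_eq)
  finally have "sqrt ((1 + \<bar>\<rho>\<bar>)\<^sup>2) \<le> sqrt (t\<^sup>2 * (1 - \<rho>\<^sup>2))" by (rule real_sqrt_le_mono)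
  then have ts: "1 + \<bar>\<rho>\<bar> \<le> t * sqrt (1 - \<rho>\<^sup>2)" using t by (simp add: real_sqrt_mult)
  have "R_ratio m n k d \<le> goe_small_prob m d * (t ^ card (goe_idx m) * goe_small_prob m d) / (goe_small_prob m d)\<^sup>2"
    unfolding R_ratio_def rho[symmetric] using pair_le_prod[OF m P rho1 t d ts] P by (intro divide_right_mono) auto
  also have "\<dots> = t ^ card (goe_idx m)" using P by (simp add: power2_eq_square)
  finally show ?thesis .
qed

lemma R_pack:
  assumes m: "m \<ge> 1" and P: "goe_small_prob m d = exp (bb - real n * ln 2)" and d: "d \<ge> 0"
    and j4: "4 * j \<le> n" and n1: "n \<ge> 1" and k: "k = j \<or> k = n - j"
  shows "0 \<le> R_ratio m n k d \<and> R_ratio m n k d \<le> 2 ^ n * exp (- bb)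
         \<and> (j \<ge> 1 \<longrightarrow> R_ratio m n k d \<le> (real n / real j) powr (real m ^ 2 / 2))"
proof (intro conjI impI)
  have Ppos: "goe_small_prob m d > 0" using P by simp
  show "0 \<le> R_ratio m n k d" by (rule R_nonneg)
  have "R_ratio m n k d \<le> 1 / goe_small_prob m d" by (rule R_le_inv[OF m Ppos])
  also have "\<dots> = exp (real n * ln 2) * exp (- bb)"
    unfolding P by (simp add: exp_diff exp_minus field_simps)
  also have "exp (real n * ln 2) = (2::real) ^ n" by (simp add: exp_of_nat_mult)
  finally show "R_ratio m n k d \<le> 2 ^ n * exp (- bb)" .
  assume j1: "j \<ge> 1"
  have jn: "j \<le> n" using j4 by simp
  define \<rho> where "\<rho> = 1 - 2 * real k / real n"
  have arho: "\<bar>\<rho>\<bar> = 1 - 2 * real j / real n"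
  proof (cases "k = j")
    case True
    have "2 * real j / real n \<le> 1" using j4 n1 by (simp add: field_simps)
    then show ?thesis unfolding \<rho>_def True by simp
  next
    case False
    then have kk: "k = n - j" using k by simp
    have "real k = real n - real j" using kk jn by simp
    then have "\<rho> = 2 * real j / real n - 1" unfolding \<rho>_def using n1 by (simp add: field_simps)
    moreover have "2 * real j / real n \<le> 1" using j4 n1 by (simp add: field_simps)
    ultimately show ?thesis by simp
  qed
  have rho1: "\<bar>\<rho>\<bar> < 1" using arho j1 n1 by simp
  define t where "t = sqrt (real n / real j)"
  have nj: "real n / real j \<ge> 1" using j1 jn by simp
  have t1: "t \<ge> 1" unfolding t_def using nj by simp
  have t2: "t\<^sup>2 = real n / real j" unfolding t_def using nj by simp
  have cond: "1 + \<bar>\<rho>\<bar> \<le> t\<^sup>2 * (1 - \<bar>\<rho>\<bar>)"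
    unfolding t2 arho using j1 n1 by (simp add: field_simps)
  have "R_ratio m n k d \<le> t ^ card (goe_idx m)"
    by (rule R_le_t[OF m Ppos d \<rho>_def rho1 t1 cond])
  also have "\<dots> \<le> t ^ (m * m)"
    using t1 card_goe_idx by (intro power_increasing) auto
  also have "\<dots> = (real n / real j) powr (real m ^ 2 / 2)"
  proof -
    have "t = (real n / real j) powr (1/2)" unfolding t_def using nj by (simp add: powr_half_sqrt)
    moreover have "((real n / real j) powr (1/2)) ^ (m * m) = (real n / real j) powr (real (m * m) * (1/2))"
      using nj n1 j1 by (intro powr_power) auto
    ultimately have "t ^ (m * m) = (real n / real j) powr (real (m * m) * (1/2))" by simp
    then show ?thesis by (simp add: power2_eq_square)
  qed
  finally show "R_ratio m n k d \<le> (real n / real j) powr (real m ^ 2 / 2)" .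
qed


lemma binom_le_exp:
  assumes j: "j \<ge> 1" "j \<le> n"
  shows "real (n choose j) \<le> (exp 1 * real n / real j) ^ j"
proof -
  define x where "x = real j / real n"
  have n: "n \<ge> 1" using j by simp
  have x: "x > 0" unfolding x_def using j n by simp
  have "real (n choose j) * x ^ j \<le> (\<Sum>k\<le>n. real (n choose k) * x ^ k)"
    by (rule member_le_sum[where f="\<lambda>k. real (n choose k) * x ^ k"]) (use j x in auto)
  also have "\<dots> = (\<Sum>k\<le>n. real (n choose k) * x ^ k * 1 ^ (n - k))" by simp
  also have "\<dots> = (x + 1) ^ n" by (rule binomial_ring[symmetric])
  also have "\<dots> \<le> exp x ^ n"
    using x by (intro power_mono) (auto simp: add.commute[of x] exp_ge_add_one_self)
  also have "\<dots> = exp (real j)"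
    using n unfolding x_def by (simp add: exp_of_nat_mult[symmetric])
  finally have "real (n choose j) * x ^ j \<le> exp (real j)" .
  then have "real (n choose j) \<le> exp (real j) / x ^ j"
    using x by (simp add: field_simps)
  also have "\<dots> = (exp 1 * real n / real j) ^ j"
    unfolding x_def using j n
    by (simp add: power_divide power_mult_distrib exp_of_nat_mult[symmetric] field_simps)
  finally show ?thesis .
qed

lemma binom_sum_le:
  assumes J: "4 * J \<le> n"
  shows "(\<Sum>j\<in>{0..J}. real (n choose j)) \<le> 3 powr (real n / 4) * (4 / 3) ^ n"
proof -
  have "(\<Sum>j\<in>{0..J}. real (n choose j)) \<le> (\<Sum>j\<in>{0..J}. 3 powr (real n / 4) * (real (n choose j) * (1/3) ^ j))"
  proof (intro sum_mono)
    fix j assume "j \<in> {0..J}"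
    then have jn: "real j \<le> real n / 4" using J by auto
    have "(1/3::real) ^ j = 1 / 3 powr real j"
      by (simp add: power_one_over powr_realpow)
    then have "3 powr (real n / 4) * (1/3) ^ j = 3 powr (real n / 4 - real j)"
      by (simp add: powr_diff)
    also have "\<dots> \<ge> 1" using jn by (intro ge_one_powr_ge_zero) auto
    finally have "1 \<le> 3 powr (real n / 4) * (1/3) ^ j" .
    then have "real (n choose j) * 1 \<le> real (n choose j) * (3 powr (real n / 4) * (1/3) ^ j)"
      by (intro mult_left_mono) auto
    then show "real (n choose j) \<le> 3 powr (real n / 4) * (real (n choose j) * (1/3) ^ j)"
      by (simp add: algebra_simps)
  qed
  also have "\<dots> = 3 powr (real n / 4) * (\<Sum>j\<in>{0..J}. real (n choose j) * (1/3) ^ j)"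
    by (simp add: sum_distrib_left)
  also have "\<dots> \<le> 3 powr (real n / 4) * (\<Sum>j\<le>n. real (n choose j) * (1/3) ^ j * 1 ^ (n - j))"
  proof (intro mult_left_mono)
    have "(\<Sum>j\<in>{0..J}. real (n choose j) * (1/3) ^ j) \<le> (\<Sum>j\<in>{..n}. real (n choose j) * (1/3) ^ j)"
      using J by (intro sum_mono2) auto
    then show "(\<Sum>j\<in>{0..J}. real (n choose j) * (1/3) ^ j) \<le> (\<Sum>j\<le>n. real (n choose j) * (1/3) ^ j * 1 ^ (n - j))"
      by simp
  qed simp
  also have "(\<Sum>j\<le>n. real (n choose j) * (1/3) ^ j * 1 ^ (n - j)) = (1/3 + 1) ^ n"
    by (rule binomial_ring[symmetric])
  finally show ?thesis by simp
qed

definition qq :: real where "qq = exp (9 / 8 * ln 2 - 3 / 4 * ln 3)"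

lemma qq_lt1: "qq < 1" and qq_pos: "qq > 0"
proof -
  have a: "ln (8::real) = 3 * ln 2" using ln_realpow[of "2::real" 3] by simp
  have b: "ln (9::real) = 2 * ln 3" using ln_realpow[of "3::real" 2] by simp
  have "ln (8::real) < ln 9" by simp
  then have "9 * ln (2::real) < 6 * ln 3" using a b by simp
  then have "9 / 8 * ln 2 - 3 / 4 * ln (3::real) < 0" by simp
  then show "qq < 1" unfolding qq_def by simp
  show "qq > 0" unfolding qq_def by simp
qed

lemma qq_pow: "2 powr (- real n) * 2 powr (real n / 8) * (3 powr (real n / 4) * (4 / 3) ^ n) = qq ^ n"
proof -
  have "(4 / 3 :: real) ^ n = exp (real n * (2 * ln 2 - ln 3))"
  proof -
    have l: "ln (4/3::real) = 2 * ln 2 - ln 3"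
      using ln_div[of 4 3] ln_realpow[of 2 2] by simp
    have "(4 / 3 :: real) ^ n = exp (ln (4/3)) ^ n" by simp
    also have "\<dots> = exp (real n * ln (4/3))" by (simp add: exp_of_nat_mult)
    finally show ?thesis using l by simp
  qed
  moreover have "qq ^ n = exp (real n * (9 / 8 * ln 2 - 3 / 4 * ln 3))"
    unfolding qq_def by (simp add: exp_of_nat_mult[symmetric])
  ultimately show ?thesis
    by (simp add: powr_def exp_add[symmetric] algebra_simps)
qed

lemma lnlim: "((\<lambda>u::real. ln (2 * exp 1 * u) * ln u / u) \<longlongrightarrow> 0) at_top"
  by real_asymp

lemma term_bound:
  fixes n j :: nat and a b c U r :: real
  assumes n: "n \<ge> 1" and jn4: "4 * j \<le> n" and c: "c > 0" and bc: "b \<ge> c * a" and a: "a \<ge> 0"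
    and b: "b \<ge> 0" and U: "U \<ge> 4"
    and uU: "\<And>u. u \<ge> U \<Longrightarrow> ln (2 * exp 1 * u) * ln u / u \<le> c * (ln 2 / 4) / 2"
    and aU: "a * ln U \<le> (ln 2 / 4) * real n"
    and r0: "0 \<le> r" and r1: "r \<le> 2 ^ n * exp (- b)"
    and r2: "j \<ge> 1 \<Longrightarrow> r \<le> (real n / real j) powr (a / 2)"
  shows "real (n choose j) * r \<le> 2 ^ n * exp (- b / 2) * (1 / 2) ^ j + real (n choose j) * 2 powr (real n / 8)"
proof -
  define B where "B = real (n choose j)"
  have B0: "B \<ge> 0" unfolding B_def by simp
  have T1: "0 \<le> 2 ^ n * exp (- b / 2) * (1 / 2 :: real) ^ j" by simp
  have T2: "0 \<le> B * 2 powr (real n / 8)" using B0 by simp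
  show ?thesis
  proof (cases "B \<le> exp (b / 2) * (1 / 2) ^ j")
    case True
    have "B * r \<le> B * (2 ^ n * exp (- b))" using r1 B0 by (rule mult_left_mono)
    also have "\<dots> \<le> (exp (b / 2) * (1 / 2) ^ j) * (2 ^ n * exp (- b))"
      using True by (intro mult_right_mono) auto
    also have "\<dots> = 2 ^ n * (exp (b / 2) * exp (- b)) * (1 / 2) ^ j" by (simp add: algebra_simps)
    also have "exp (b / 2) * exp (- b) = exp (- b / 2)" by (simp add: exp_add[symmetric])
    finally have X: "B * r \<le> 2 ^ n * exp (- b / 2) * (1 / 2) ^ j" .
    show ?thesis using X T2 unfolding B_def by linarith
  next
    case False
    then have Bgt: "B > exp (b / 2) * (1 / 2) ^ j" by simp
    have j1: "j \<ge> 1"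
    proof (rule ccontr)
      assume "\<not> j \<ge> 1"
      then have "j = 0" by simp
      moreover have "exp (b / 2) \<ge> 1" using b by simp
      ultimately show False using Bgt unfolding B_def by simp
    qed
    have jn: "j \<le> n" using jn4 by simp
    define u where "u = real n / real j"
    have u4: "u \<ge> 4" unfolding u_def using j1 jn4 by (simp add: field_simps)
    have upos: "u > 0" using u4 by simp
    have "B \<le> (exp 1 * u) ^ j" unfolding B_def u_def using binom_le_exp[OF j1 jn] by (simp add: mult.assoc)
    then have "exp (b / 2) * (1 / 2) ^ j < (exp 1 * u) ^ j" using Bgt by simp
    then have "exp (b / 2) * (1 / 2) ^ j * 2 ^ j < (exp 1 * u) ^ j * 2 ^ j"
      by (intro mult_strict_right_mono) auto
    then have "exp (b / 2) < (2 * exp 1 * u) ^ j"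
      by (simp add: power_mult_distrib[symmetric] mult.commute mult.left_commute power_one_over)
    then have "ln (exp (b / 2)) < ln ((2 * exp 1 * u) ^ j)"
      using upos by (subst ln_less_cancel_iff) auto
    then have L0: "b / 2 < real j * ln (2 * exp 1 * u)"
      using upos by (simp add: ln_realpow)
    then have L: "c * a < 2 * real j * ln (2 * exp 1 * u)" using bc by simp
    have lnu0: "ln u \<ge> 0" using u4 by simp
    have key: "a * ln u \<le> (ln 2 / 4) * real n"
    proof (cases "u \<le> U")
      case True
      have "ln u \<le> ln U" using True upos by simp
      then have "a * ln u \<le> a * ln U" using a by (rule mult_left_mono)
      then show ?thesis using aU by simp
    next
      case False
      then have h: "ln (2 * exp 1 * u) * ln u / u \<le> c * (ln 2 / 4) / 2" using uU by simp
      have "a \<le> 2 * real j * ln (2 * exp 1 * u) / c" using L c by (simp add: field_simps)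
      then have "a * ln u \<le> (2 * real j * ln (2 * exp 1 * u) / c) * ln u"
        using lnu0 by (rule mult_right_mono)
      also have "\<dots> = (2 * real n / c) * (ln (2 * exp 1 * u) * ln u / u)"
        unfolding u_def using j1 c by (simp add: field_simps)
      also have "\<dots> \<le> (2 * real n / c) * (c * (ln 2 / 4) / 2)"
        using h c by (intro mult_left_mono) auto
      also have "\<dots> = (ln 2 / 4) * real n" using c by (simp add: field_simps)
      finally show ?thesis .
    qed
    have "r \<le> (real n / real j) powr (a / 2)" using r2 j1 by simp
    also have "\<dots> = exp ((a / 2) * ln u)" unfolding u_def using upos u_def n j1 by (simp add: powr_def)
    also have "\<dots> \<le> exp (real n / 8 * ln 2)" using key by (simp add: algebra_simps)
    also have "\<dots> = 2 powr (real n / 8)" by (simp add: powr_def)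
    finally have "B * r \<le> B * 2 powr (real n / 8)" using B0 by (intro mult_left_mono) auto
    then show ?thesis using T1 unfolding B_def by linarith
  qed
qed


lemma floor_iff: "j \<le> nat \<lfloor>real n / 4\<rfloor> \<longleftrightarrow> 4 * j \<le> n"
proof -
  have "j \<le> nat \<lfloor>real n / 4\<rfloor> \<longleftrightarrow> int j \<le> \<lfloor>real n / 4\<rfloor>" by linarith
  also have "\<dots> \<longleftrightarrow> real j \<le> real n / 4" by (simp add: le_floor_iff)
  also have "\<dots> \<longleftrightarrow> 4 * j \<le> n" by linarith
  finally show ?thesis .
qed

lemma geo_sum_eq: "(\<Sum>j\<in>{0..J}. (1/2::real) ^ j) = 2 - (1/2) ^ J"
  by (induction J) (auto simp: sum.atLeast0_atMost_Suc)

lemma geo_sum: "(\<Sum>j\<in>{0..J}. (1/2::real) ^ j) \<le> 2"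
  using geo_sum_eq[of J] by simp

lemma asym_main:
  fixes a b :: "nat \<Rightarrow> real" and r :: "nat \<Rightarrow> nat \<Rightarrow> real" and c :: real
  assumes ax: "(\<lambda>n. a n / real n) \<longlonglongrightarrow> 0"
    and c: "c > 0"
    and bc: "eventually (\<lambda>n. b n \<ge> c * a n \<and> a n \<ge> 0) sequentially"
    and binf: "filterlim b at_top sequentially"
    and r: "eventually (\<lambda>n. \<forall>j. 4 * j \<le> n \<longrightarrow> 0 \<le> r n j \<and> r n j \<le> 2 ^ n * exp (- b n)
              \<and> (j \<ge> 1 \<longrightarrow> r n j \<le> (real n / real j) powr (a n / 2))) sequentially"
  shows "(\<lambda>n. 2 powr (- real n) * (\<Sum>j\<in>{0..nat \<lfloor>real n / 4\<rfloor>}. real (n choose j) * r n j)) \<longlonglongrightarrow> 0"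
proof -
  define \<kappa> :: real where "\<kappa> = ln 2 / 4"
  have kpos: "\<kappa> > 0" unfolding \<kappa>_def by simp
  have "eventually (\<lambda>u. ln (2 * exp 1 * u) * ln u / u < c * \<kappa> / 2) at_top"
    using order_tendstoD(2)[OF lnlim, of "c * \<kappa> / 2"] c kpos by simp
  then obtain u0 where u0: "\<And>u. u \<ge> u0 \<Longrightarrow> ln (2 * exp 1 * u) * ln u / u < c * \<kappa> / 2"
    unfolding eventually_at_top_linorder by blast
  define U where "U = max u0 4"
  have U4: "U \<ge> 4" unfolding U_def by simp
  have uU: "\<And>u. u \<ge> U \<Longrightarrow> ln (2 * exp 1 * u) * ln u / u \<le> c * (ln 2 / 4) / 2"
    using u0 unfolding U_def \<kappa>_def by (meson less_imp_le max.boundedE)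
  have lnU: "ln U > 0" using U4 by simp
  have ev1: "eventually (\<lambda>n. a n / real n < \<kappa> / ln U) sequentially"
    using order_tendstoD(2)[OF ax, of "\<kappa> / ln U"] kpos lnU by simp
  have ev2: "eventually (\<lambda>n. n \<ge> 1) sequentially" by (rule eventually_ge_at_top)
  have ev4: "eventually (\<lambda>n. 0 \<le> b n) sequentially"
    using binf unfolding filterlim_at_top by blast
  define S where "S = (\<lambda>n. 2 powr (- real n) * (\<Sum>j\<in>{0..nat \<lfloor>real n / 4\<rfloor>}. real (n choose j) * r n j))"
  have main: "eventually (\<lambda>n. 0 \<le> S n \<and> S n \<le> 2 * exp (- ((1/2) * b n)) + qq ^ n) sequentially"
    using ev1 ev2 ev4 bc r
  proof eventually_elim
    case (elim n)
    then have n1: "n \<ge> 1" and bn: "0 \<le> b n" and bca: "b n \<ge> c * a n" and an: "a n \<ge> 0"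
      and rr: "\<And>j. 4 * j \<le> n \<Longrightarrow> 0 \<le> r n j \<and> r n j \<le> 2 ^ n * exp (- b n)
              \<and> (j \<ge> 1 \<longrightarrow> r n j \<le> (real n / real j) powr (a n / 2))"
      by auto
    have "a n < \<kappa> / ln U * real n" using elim(1) n1 by (simp add: field_simps)
    then have "a n * ln U < \<kappa> * real n" using lnU by (simp add: field_simps)
    then have aU: "a n * ln U \<le> (ln 2 / 4) * real n" unfolding \<kappa>_def by simp
    define J where "J = nat \<lfloor>real n / 4\<rfloor>"
    have J4: "4 * J \<le> n" using floor_iff[of J n] unfolding J_def by simp
    have tb: "real (n choose j) * r n j \<le> 2 ^ n * exp (- b n / 2) * (1 / 2) ^ j + real (n choose j) * 2 powr (real n / 8)"
      if "j \<in> {0..J}" for j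
    proof -
      have j4: "4 * j \<le> n" using that J4 by simp
      show ?thesis
        using rr[OF j4] by (intro term_bound[OF n1 j4 c bca an bn U4 uU aU]) auto
    qed
    have sum0: "0 \<le> (\<Sum>j\<in>{0..J}. real (n choose j) * r n j)"
      using rr J4 by (intro sum_nonneg) auto
    have "(\<Sum>j\<in>{0..J}. real (n choose j) * r n j)
        \<le> (\<Sum>j\<in>{0..J}. 2 ^ n * exp (- b n / 2) * (1 / 2) ^ j + real (n choose j) * 2 powr (real n / 8))"
      using tb by (rule sum_mono)
    also have "\<dots> = 2 ^ n * exp (- b n / 2) * (\<Sum>j\<in>{0..J}. (1 / 2) ^ j) + 2 powr (real n / 8) * (\<Sum>j\<in>{0..J}. real (n choose j))"
      by (simp add: sum.distrib sum_distrib_left sum_distrib_right mult.commute)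
    also have "\<dots> \<le> 2 ^ n * exp (- b n / 2) * 2 + 2 powr (real n / 8) * (3 powr (real n / 4) * (4 / 3) ^ n)"
      using geo_sum[of J] binom_sum_le[OF J4] by (intro add_mono mult_left_mono) auto
    finally have up: "(\<Sum>j\<in>{0..J}. real (n choose j) * r n j) \<le> 2 ^ n * exp (- b n / 2) * 2 + 2 powr (real n / 8) * (3 powr (real n / 4) * (4 / 3) ^ n)" .
    have p: "2 powr (- real n) * 2 ^ n = (1::real)"
      by (simp add: powr_realpow[symmetric] powr_add[symmetric])
    have "S n \<le> 2 powr (- real n) * (2 ^ n * exp (- b n / 2) * 2 + 2 powr (real n / 8) * (3 powr (real n / 4) * (4 / 3) ^ n))"
      unfolding S_def J_def[symmetric] using up by (intro mult_left_mono) auto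
    also have "\<dots> = (2 powr (- real n) * 2 ^ n) * exp (- b n / 2) * 2 + 2 powr (- real n) * 2 powr (real n / 8) * (3 powr (real n / 4) * (4 / 3) ^ n)"
      by (simp add: algebra_simps)
    also have "\<dots> = 2 * exp (- ((1/2) * b n)) + qq ^ n"
      using p qq_pow[of n] by simp
    finally have "S n \<le> 2 * exp (- ((1/2) * b n)) + qq ^ n" .
    moreover have "0 \<le> S n" unfolding S_def J_def[symmetric] using sum0 by simp
    ultimately show ?case by simp
  qed
  have b2: "filterlim (\<lambda>n. (1/2) * b n) at_top sequentially"
    by (rule filterlim_tendsto_pos_mult_at_top[OF tendsto_const _ binf]) simp
  have "filterlim (\<lambda>n. - ((1/2) * b n)) at_bot sequentially"
    using filterlim_uminus_at_top[THEN iffD1, OF b2] .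
  then have e0: "(\<lambda>n. exp (- ((1/2) * b n))) \<longlonglongrightarrow> 0"
    by (rule filterlim_compose[OF exp_at_bot])
  have q0: "(\<lambda>n. qq ^ n) \<longlonglongrightarrow> 0"
    using qq_lt1 qq_pos by (intro LIMSEQ_power_zero) auto
  have lim: "(\<lambda>n. 2 * exp (- ((1/2) * b n)) + qq ^ n) \<longlonglongrightarrow> 0"
    using tendsto_add[OF tendsto_mult[OF tendsto_const e0] q0] by simp
  have "S \<longlonglongrightarrow> 0"
  proof (rule tendsto_sandwich[OF _ _ tendsto_const lim])
    show "eventually (\<lambda>n. 0 \<le> S n) sequentially" using main by (rule eventually_mono) auto
    show "eventually (\<lambda>n. S n \<le> 2 * exp (- ((1/2) * b n)) + qq ^ n) sequentially"
      using main by (rule eventually_mono) auto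
  qed
  then show ?thesis unfolding S_def .
qed


lemma reidx_sum:
  fixes f :: "nat \<Rightarrow> real"
  assumes "c \<le> n"
  shows "(\<Sum>k\<in>{c..n}. f k) = (\<Sum>j\<in>{0..n - c}. f (n - j))"
  by (rule sum.reindex_bij_witness[of _ "\<lambda>k. n - k" "\<lambda>j. n - j"]) (use assms in auto)

theorem lemma3p3:
  fixes m :: "nat \<Rightarrow> nat" and \<xi> :: "nat \<Rightarrow> real" and \<delta> :: "nat \<Rightarrow> real" and \<gamma> :: real
  assumes m_inf: "filterlim (\<lambda>n. real (m n) ^ 2) at_top sequentially"
    and m_small: "(\<lambda>n. real (m n) ^ 2 / real n) \<longlonglongrightarrow> 0"
    and \<gamma>: "\<gamma> > 1"
    and \<delta>_def: "\<And>n. \<delta> n = \<gamma> * 2 * exp (- 3 / 4) * sqrt (real (m n)) * 4 powr (- \<xi> n * real n / real (m n) ^ 2)"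
    and \<xi>_def: "\<And>n. goe_small_prob (m n) (\<delta> n) =
                  (exp (3 / 4) / (2 * sqrt (real (m n))) * \<delta> n) powr (real (m n) ^ 2 / (2 * \<xi> n))"
    and \<xi>_lim: "\<xi> \<longlonglongrightarrow> 1"
  shows "(\<lambda>n. 2 powr (- real n) * (\<Sum>k \<in> {0..nat \<lfloor>real n / 4\<rfloor>}. real (n choose k) * R_ratio (m n) n k (\<delta> n))
            + 2 powr (- real n) * (\<Sum>k \<in> {nat \<lceil>3 * real n / 4\<rceil>..n}. real (n choose k) * R_ratio (m n) n k (\<delta> n)))
         \<longlonglongrightarrow> 0"
  proof -
  define a where "a = (\<lambda>n. real (m n) ^ 2)"
  define b where "b = (\<lambda>n. (ln \<gamma> / (2 * \<xi> n)) * a n)"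
  define c where "c = ln \<gamma> / 3"
  have lg: "ln \<gamma> > 0" using \<gamma> by simp
  have cpos: "c > 0" unfolding c_def using lg by simp
  have ev_m: "eventually (\<lambda>n. m n \<ge> 1) sequentially"
  proof -
    have "eventually (\<lambda>n. real (m n) ^ 2 \<ge> 1) sequentially"
      using m_inf unfolding filterlim_at_top by blast
    then show ?thesis
      by (rule eventually_mono) (metis less_one not_less of_nat_0 power_zero_numeral zero_less_one_class.zero_le_one le_numeral_extra(4) not_one_le_zero)
  qed
  have ev_xi: "eventually (\<lambda>n. 1/2 < \<xi> n \<and> \<xi> n < 3/2) sequentially"
    using order_tendstoD(1)[OF \<xi>_lim, of "1/2"] order_tendstoD(2)[OF \<xi>_lim, of "3/2"]
    by (auto intro: eventually_conj)
  have ev_n: "eventually (\<lambda>n. n \<ge> 1) sequentially" by (rule eventually_ge_at_top)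
  have Pform: "goe_small_prob (m n) (\<delta> n) = exp (b n - real n * ln 2)"
    if mn: "m n \<ge> 1" and xi: "1/2 < \<xi> n" for n
  proof -
    have sq: "sqrt (real (m n)) > 0" using mn by simp
    have an: "a n > 0" unfolding a_def using mn by simp
    have base: "exp (3 / 4) / (2 * sqrt (real (m n))) * \<delta> n = \<gamma> * 4 powr (- \<xi> n * real n / real (m n) ^ 2)"
      using sq unfolding \<delta>_def by (simp add: exp_minus field_simps)
    have l4: "ln (4::real) = 2 * ln 2" using ln_realpow[of "2::real" 2] by simp
    have "goe_small_prob (m n) (\<delta> n) = (\<gamma> * 4 powr (- \<xi> n * real n / a n)) powr (a n / (2 * \<xi> n))"
      unfolding \<xi>_def base a_def by simp
    also have "\<dots> = exp ((a n / (2 * \<xi> n)) * (ln \<gamma> + (- \<xi> n * real n / a n) * (2 * ln 2)))"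
      using \<gamma> by (simp add: powr_def ln_mult l4)
    also have "(a n / (2 * \<xi> n)) * (ln \<gamma> + (- \<xi> n * real n / a n) * (2 * ln 2)) = b n - real n * ln 2"
      unfolding b_def using an xi by (simp add: field_simps)
    finally show ?thesis .
  qed
  have dpos: "\<delta> n \<ge> 0" for n
    unfolding \<delta>_def using \<gamma> by simp
  have rb: "eventually (\<lambda>n. \<forall>j. 4 * j \<le> n \<longrightarrow> 0 \<le> R_ratio (m n) n (kf n j) (\<delta> n) \<and> R_ratio (m n) n (kf n j) (\<delta> n) \<le> 2 ^ n * exp (- b n)
              \<and> (j \<ge> 1 \<longrightarrow> R_ratio (m n) n (kf n j) (\<delta> n) \<le> (real n / real j) powr (a n / 2))) sequentially"
    if kk: "\<And>n j. kf n j = j \<or> kf n j = n - j" for kf :: "nat \<Rightarrow> nat \<Rightarrow> nat"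
    using ev_m ev_xi ev_n
  proof eventually_elim
    case (elim n)
    then have mn: "m n \<ge> 1" and xi: "1/2 < \<xi> n" and n1: "n \<ge> 1" by auto
    show ?case
    proof (intro allI impI)
      fix j assume j4: "4 * j \<le> n"
      show "0 \<le> R_ratio (m n) n (kf n j) (\<delta> n) \<and> R_ratio (m n) n (kf n j) (\<delta> n) \<le> 2 ^ n * exp (- b n)
              \<and> (j \<ge> 1 \<longrightarrow> R_ratio (m n) n (kf n j) (\<delta> n) \<le> (real n / real j) powr (a n / 2))"
        using R_pack[OF mn Pform[OF mn xi] dpos j4 n1 kk] unfolding a_def by simp
    qed
  qed
  have ax: "(\<lambda>n. a n / real n) \<longlonglongrightarrow> 0" unfolding a_def by (rule m_small)
  have bc: "eventually (\<lambda>n. b n \<ge> c * a n \<and> a n \<ge> 0) sequentially"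
    using ev_xi
  proof (rule eventually_mono)
    fix n assume xi: "1/2 < \<xi> n \<and> \<xi> n < 3/2"
    have a0: "a n \<ge> 0" unfolding a_def by simp
    have "ln \<gamma> / 3 \<le> ln \<gamma> / (2 * \<xi> n)" using xi lg by (intro divide_left_mono) auto
    then have "c * a n \<le> b n" unfolding b_def c_def using a0 by (intro mult_right_mono) auto
    then show "b n \<ge> c * a n \<and> a n \<ge> 0" using a0 by simp
  qed
  have binf: "filterlim b at_top sequentially"
  proof -
    have "(\<lambda>n. ln \<gamma> / (2 * \<xi> n)) \<longlonglongrightarrow> ln \<gamma> / (2 * 1)"
      by (intro tendsto_divide tendsto_const tendsto_mult \<xi>_lim) auto
    then have "filterlim (\<lambda>n. ln \<gamma> / (2 * \<xi> n) * a n) at_top sequentially"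
      using m_inf unfolding a_def by (intro filterlim_tendsto_pos_mult_at_top) (auto simp: lg)
    then show ?thesis unfolding b_def .
  qed
  have r1: "eventually (\<lambda>n. \<forall>j. 4 * j \<le> n \<longrightarrow> 0 \<le> R_ratio (m n) n j (\<delta> n) \<and> R_ratio (m n) n j (\<delta> n) \<le> 2 ^ n * exp (- b n)
              \<and> (j \<ge> 1 \<longrightarrow> R_ratio (m n) n j (\<delta> n) \<le> (real n / real j) powr (a n / 2))) sequentially"
    using rb[of "\<lambda>n j. j"] by simp
  have r2: "eventually (\<lambda>n. \<forall>j. 4 * j \<le> n \<longrightarrow> 0 \<le> R_ratio (m n) n (n - j) (\<delta> n) \<and> R_ratio (m n) n (n - j) (\<delta> n) \<le> 2 ^ n * exp (- b n)
              \<and> (j \<ge> 1 \<longrightarrow> R_ratio (m n) n (n - j) (\<delta> n) \<le> (real n / real j) powr (a n / 2))) sequentially"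
    using rb[of "\<lambda>n j. n - j"] by simp
  define S1 where "S1 = (\<lambda>n. 2 powr (- real n) * (\<Sum>k \<in> {0..nat \<lfloor>real n / 4\<rfloor>}. real (n choose k) * R_ratio (m n) n k (\<delta> n)))"
  define T2 where "T2 = (\<lambda>n. 2 powr (- real n) * (\<Sum>k \<in> {nat \<lceil>3 * real n / 4\<rceil>..n}. real (n choose k) * R_ratio (m n) n k (\<delta> n)))"
  define U2 where "U2 = (\<lambda>n. 2 powr (- real n) * (\<Sum>j \<in> {0..nat \<lfloor>real n / 4\<rfloor>}. real (n choose j) * R_ratio (m n) n (n - j) (\<delta> n)))"
  have lim1: "S1 \<longlonglongrightarrow> 0" unfolding S1_def by (rule asym_main[OF ax cpos bc binf r1])
  have lim2: "U2 \<longlonglongrightarrow> 0" unfolding U2_def by (rule asym_main[OF ax cpos bc binf r2])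
  have S1nn: "S1 n \<ge> 0" for n unfolding S1_def by (intro mult_nonneg_nonneg sum_nonneg) (auto intro: R_nonneg)
  have T2nn: "T2 n \<ge> 0" for n unfolding T2_def by (intro mult_nonneg_nonneg sum_nonneg) (auto intro: R_nonneg)
  have T2U2: "T2 n \<le> U2 n" for n
  proof -
    define cc where "cc = nat \<lceil>3 * real n / 4\<rceil>"
    define J where "J = nat \<lfloor>real n / 4\<rfloor>"
    have cn: "cc \<le> n"
    proof -
      have "\<lceil>3 * real n / 4\<rceil> \<le> int n" by (simp add: ceiling_le_iff)
      then show ?thesis unfolding cc_def by linarith
    qed
    have cge: "real cc \<ge> 3 * real n / 4"
    proof -
      have "of_int \<lceil>3 * real n / 4\<rceil> \<ge> 3 * real n / 4" by (rule le_of_int_ceiling)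
      moreover have "\<lceil>3 * real n / 4\<rceil> \<ge> 0" by simp
      ultimately show ?thesis unfolding cc_def by simp
    qed
    have ncJ: "n - cc \<le> J"
    proof -
      have "real (n - cc) = real n - real cc" using cn by simp
      then have "4 * (n - cc) \<le> n" using cge by linarith
      then show ?thesis unfolding J_def using floor_iff[of "n - cc" n] by simp
    qed
    have "(\<Sum>k \<in> {cc..n}. real (n choose k) * R_ratio (m n) n k (\<delta> n))
        = (\<Sum>j \<in> {0..n - cc}. real (n choose (n - j)) * R_ratio (m n) n (n - j) (\<delta> n))"
      by (rule reidx_sum[OF cn])
    also have "\<dots> = (\<Sum>j \<in> {0..n - cc}. real (n choose j) * R_ratio (m n) n (n - j) (\<delta> n))"
      by (intro sum.cong refl) (auto simp: binomial_symmetric[symmetric])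
    also have "\<dots> \<le> (\<Sum>j \<in> {0..J}. real (n choose j) * R_ratio (m n) n (n - j) (\<delta> n))"
      using ncJ R_nonneg by (intro sum_mono2) auto
    finally have "(\<Sum>k \<in> {cc..n}. real (n choose k) * R_ratio (m n) n k (\<delta> n))
        \<le> (\<Sum>j \<in> {0..J}. real (n choose j) * R_ratio (m n) n (n - j) (\<delta> n))" .
    then show ?thesis unfolding T2_def U2_def cc_def[symmetric] J_def[symmetric]
      by (intro mult_left_mono) auto
  qed
  have "(\<lambda>n. S1 n + T2 n) \<longlonglongrightarrow> 0"
  proof (rule tendsto_sandwich[OF _ _ tendsto_const])
    show "eventually (\<lambda>n. 0 \<le> S1 n + T2 n) sequentially" using S1nn T2nn by (intro always_eventually) (simp add: add_nonneg_nonneg)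
    show "eventually (\<lambda>n. S1 n + T2 n \<le> S1 n + U2 n) sequentially" using T2U2 by (intro always_eventually) simp
    show "(\<lambda>n. S1 n + U2 n) \<longlonglongrightarrow> 0" using tendsto_add[OF lim1 lim2] by simp
  qed
  then show ?thesis unfolding S1_def T2_def .
qed

end
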